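(* Let $a,b,c,q$ be complex parameters for which all series below are defined (no denominator parameter a nonpositive integer), and for $|x|<1$ put \[ F^q(x):={}_3F_2\!\left({1,c,q\atop a,b};x\right), \] and write $F_a(x)$ for the same function regarded as depending on the parameter $a$ (so $F_{a-1}$, $F_{a-2}$ have $a$ replaced by $a-1$, $a-2$). Then \[ (a-q-1)(b-q-1)F^q(x)+q\big(a+b-3-2q-(c-q-1)x\big)F^{q+1}(x)+q(1+q)(1-x)F^{q+2}(x)=(a-1)(b-1), \] \[ (a-2)(a-1)(1-x)F_{a-2}(x)+(a-1)\big((2a-c-q-3)x-a+b+1\big)F_{a-1}(x)-(a-q-1)(a-c-1)x\,F_a(x)=(a-1)(b-1). \] In particular, if $a,b,c,q$ are real with $a+b>c+q+2$, then \[ (a-q-1)(b-q-1)F^q(1)+q(a+b-c-2-q)F^{q+1}(1)=(a-1)(b-1), \] \[ (a-1)(a+b-c-q-2)F_{a-1}(1)-(a-q-1)(a-c-1)F_a(1)=(a-1)(b-1). \]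
   Context: ${}_3F_2\!\left({a_1,a_2,a_3\atop b_1,b_2};x\right)=\sum_{n\ge0}\frac{(a_1)_n(a_2)_n(a_3)_n}{(b_1)_n(b_2)_n}\frac{x^n}{n!}$ with $(x)_n=x(x+1)\cdots(x+n-1)$; it converges at $x=1$ when $b_1+b_2-a_1-a_2-a_3>0$. *)

theory Defs
  imports "HOL-Analysis.Analysis"
begin

definition hyp3F2 :: "complex \<Rightarrow> complex \<Rightarrow> complex \<Rightarrow> complex \<Rightarrow> complex \<Rightarrow> complex \<Rightarrow> complex" where
  "hyp3F2 a1 a2 a3 b1 b2 x =
     (\<Sum>n. pochhammer a1 n * pochhammer a2 n * pochhammer a3 n
            / (pochhammer b1 n * pochhammer b2 n) * x ^ n / of_nat (fact n))"

end

theory Submission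
  imports Defs
begin

definition AA :: "complex \<Rightarrow> complex \<Rightarrow> complex \<Rightarrow> complex \<Rightarrow> nat \<Rightarrow> complex" where
  "AA c p a b n = pochhammer c n * pochhammer p n / (pochhammer a n * pochhammer b n)"

lemma hyp_AA: "hyp3F2 1 c p a b x = (\<Sum>n. AA c p a b n * x ^ n)"
  unfolding hyp3F2_def AA_def
  by (intro arg_cong[where f=suminf] ext) (simp add: pochhammer_fact[symmetric])

lemma poch_nz: "a \<notin> \<int>\<^sub>\<le>\<^sub>0 \<Longrightarrow> pochhammer (a::complex) n \<noteq> 0"
  using pochhammer_eq_0_imp_nonpos_Int by blast

lemma plus_nz: "a \<notin> \<int>\<^sub>\<le>\<^sub>0 \<Longrightarrow> (a::complex) + of_nat n \<noteq> 0"
proof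
  assume "a \<notin> \<int>\<^sub>\<le>\<^sub>0" "a + of_nat n = 0"
  then have "a = - of_nat n" by (simp add: eq_neg_iff_add_eq_0)
  with \<open>a \<notin> \<int>\<^sub>\<le>\<^sub>0\<close> show False by simp
qed

lemma AA_0 [simp]: "AA c p a b 0 = 1" by (simp add: AA_def)

lemma AA_Suc:
  assumes "a \<notin> \<int>\<^sub>\<le>\<^sub>0" "b \<notin> \<int>\<^sub>\<le>\<^sub>0"
  shows "AA c p a b (Suc n) = AA c p a b n * ((c + of_nat n) * (p + of_nat n) / ((a + of_nat n) * (b + of_nat n)))"
  using poch_nz[OF assms(1), of n] poch_nz[OF assms(2), of n] plus_nz[OF assms(1), of n] plus_nz[OF assms(2), of n]
  unfolding AA_def by (simp add: pochhammer_rec' field_simps)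

lemma AA_shift_p: "p * AA c (p + 1) a b n = AA c p a b n * (p + of_nat n)"
proof -
  have e: "p * pochhammer (p+1) n = pochhammer p n * (p + of_nat n)"
    using pochhammer_rec[of p n] pochhammer_rec'[of p n] by (simp add: mult.commute)
  have "p * AA c (p + 1) a b n = (pochhammer c n * (p * pochhammer (p+1) n)) / (pochhammer a n * pochhammer b n)"
    unfolding AA_def by (simp add: mult_ac)
  also have "\<dots> = (pochhammer c n * (pochhammer p n * (p + of_nat n))) / (pochhammer a n * pochhammer b n)"
    by (simp only: e)
  also have "\<dots> = AA c p a b n * (p + of_nat n)"
    unfolding AA_def by (simp add: mult_ac)
  finally show ?thesis .
qed

lemma AA_shift_den:
  assumes "d \<notin> \<int>\<^sub>\<le>\<^sub>0" "d + 1 \<notin> \<int>\<^sub>\<le>\<^sub>0" "b \<notin> \<int>\<^sub>\<le>\<^sub>0"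
  shows "d * AA c p d b n = AA c p (d + 1) b n * (d + of_nat n)"
proof -
  have e: "d * pochhammer (1 + d) n = pochhammer d n * (d + of_nat n)"
    using pochhammer_rec[of d n] pochhammer_rec'[of d n] by (simp add: mult.commute add.commute)
  have nz: "pochhammer d n \<noteq> 0" "pochhammer (1+d) n \<noteq> 0" "pochhammer b n \<noteq> 0"
    using poch_nz[OF assms(1), of n] poch_nz[OF assms(2), of n] poch_nz[OF assms(3), of n]
    by (simp_all add: add.commute)
  have "d * (pochhammer c n * pochhammer p n / (pochhammer d n * pochhammer b n))
     = pochhammer c n * pochhammer p n / (pochhammer d n * pochhammer b n * pochhammer (1+d) n) * (d * pochhammer (1+d) n)"
    using nz by (simp add: field_simps)
  also have "\<dots> = pochhammer c n * pochhammer p n / (pochhammer d n * pochhammer b n * pochhammer (1+d) n) * (pochhammer d n * (d + of_nat n))"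
    by (simp only: e)
  also have "\<dots> = pochhammer c n * pochhammer p n / (pochhammer (1+d) n * pochhammer b n) * (d + of_nat n)"
    using nz by (simp add: field_simps)
  finally show ?thesis unfolding AA_def add.commute[of d 1] .
qed

lemma AA_bound:
  assumes "a \<notin> \<int>\<^sub>\<le>\<^sub>0" "b \<notin> \<int>\<^sub>\<le>\<^sub>0"
  shows "\<exists>M. \<forall>n\<ge>1. norm (AA c p a b (Suc n)) \<le> M * real n powr Re (c + p - a - b)"
proof -
  define R where "R n = rGamma_series c n * rGamma_series p n / (rGamma_series a n * rGamma_series b n)" for n
  have "R \<longlonglongrightarrow> rGamma c * rGamma p / (rGamma a * rGamma b)"
    unfolding R_def using assms by (intro tendsto_intros) (auto simp: rGamma_eq_zero_iff)
  then have "Bseq R" using convergent_imp_Bseq convergentI by blast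
  then obtain M where M: "\<And>n. norm (R n) \<le> M" by (meson BseqE)
  have key: "AA c p a b (Suc n) = R n * exp ((c + p - a - b) * of_real (ln (real n)))" for n
  proof -
    define L where "L = (of_real (ln (real n)) :: complex)"
    have ex: "exp ((c + p - a - b) * L) = exp (c*L) * exp (p*L) / (exp (a*L) * exp (b*L))"
    proof -
      have "(c + p - a - b) * L = (c*L + p*L) - (a*L + b*L)" by (simp add: algebra_simps)
      then show ?thesis by (simp add: exp_diff exp_add)
    qed
    have nz: "pochhammer a (Suc n) \<noteq> 0" "pochhammer b (Suc n) \<noteq> 0" "(fact n :: complex) \<noteq> 0"
      using poch_nz assms by auto
    show ?thesis
      unfolding AA_def R_def rGamma_series_def L_def[symmetric] ex using nz
      by (simp add: field_simps)
  qed
  have "norm (AA c p a b (Suc n)) \<le> M * real n powr Re (c + p - a - b)" if "n \<ge> 1" for n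
  proof -
    have E: "norm (exp ((c + p - a - b) * of_real (ln (real n)))) = real n powr Re (c + p - a - b)"
      using that by (simp add: powr_def mult.commute)
    have "norm (R n) * norm (exp ((c + p - a - b) * of_real (ln (real n))))
          \<le> M * norm (exp ((c + p - a - b) * of_real (ln (real n))))"
      by (rule mult_right_mono[OF M norm_ge_zero])
    then show ?thesis unfolding key norm_mult E .
  qed
  then show ?thesis by blast
qed


lemma AA_summable:
  assumes "a \<notin> \<int>\<^sub>\<le>\<^sub>0" "b \<notin> \<int>\<^sub>\<le>\<^sub>0" "Re (c + p - a - b) < -1"
  shows "summable (AA c p a b)"
proof -
  obtain M where M: "\<And>n. n \<ge> 1 \<Longrightarrow> norm (AA c p a b (Suc n)) \<le> M * real n powr Re (c + p - a - b)"
    using AA_bound[OF assms(1,2)] by blast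
  have "summable (\<lambda>n. M * real n powr Re (c + p - a - b))"
    using assms(3) by (intro summable_mult) (simp add: summable_real_powr_iff)
  then have "summable (\<lambda>n. AA c p a b (Suc n))"
    by (rule summable_comparison_test'[where N=1]) (use M in auto)
  then show ?thesis by (simp add: summable_Suc_iff)
qed

lemma AA_tendsto0:
  assumes "a \<notin> \<int>\<^sub>\<le>\<^sub>0" "b \<notin> \<int>\<^sub>\<le>\<^sub>0" "Re (c + p - a - b) < 0"
  shows "AA c p a b \<longlonglongrightarrow> 0"
proof -
  obtain M where M: "\<And>n. n \<ge> 1 \<Longrightarrow> norm (AA c p a b (Suc n)) \<le> M * real n powr Re (c + p - a - b)"
    using AA_bound[OF assms(1,2)] by blast
  have "(\<lambda>n. real n powr Re (c + p - a - b)) \<longlonglongrightarrow> 0"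
    by (rule tendsto_neg_powr[OF assms(3) filterlim_real_sequentially])
  then have g: "(\<lambda>n. M * real n powr Re (c + p - a - b)) \<longlonglongrightarrow> 0"
    by (rule tendsto_mult_right_zero)
  have ev: "eventually (\<lambda>n. norm (AA c p a b (Suc n)) \<le> M * real n powr Re (c + p - a - b)) sequentially"
    using eventually_ge_at_top[of "1::nat"] by (rule eventually_mono) (rule M)
  have "(\<lambda>n. AA c p a b (Suc n)) \<longlonglongrightarrow> 0"
    by (rule Lim_null_comparison[OF ev g])
  then show ?thesis by (rule LIMSEQ_imp_Suc)
qed

lemma dd0: "m \<noteq> 0 \<Longrightarrow> (X / m) / (Y / m) = X / (Y::complex)"
proof -
  assume m: "m \<noteq> 0"
  have "(X / m) / (Y / m) = (X * m) / (m * Y)" by (rule divide_divide_times_eq)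
  also have "\<dots> = (m * X) / (m * Y)" by (simp only: mult.commute)
  also have "\<dots> = X / Y" using m by (rule mult_divide_mult_cancel_left)
  finally show ?thesis .
qed

lemma ratio_lim: "(\<lambda>n. (c + of_nat n) * (p + of_nat n) / ((a + of_nat n) * (b + of_nat n)) :: complex) \<longlonglongrightarrow> 1"
proof -
  have "(\<lambda>n. (c / of_nat n + 1) * (p / of_nat n + 1) / ((a / of_nat n + 1) * (b / of_nat n + 1)) :: complex)
      \<longlonglongrightarrow> (0 + 1) * (0 + 1) / ((0 + 1) * (0 + 1))"
    by (intro tendsto_intros) auto
  then have lim: "(\<lambda>n. (c / of_nat n + 1) * (p / of_nat n + 1) / ((a / of_nat n + 1) * (b / of_nat n + 1)) :: complex)
      \<longlonglongrightarrow> 1" by simp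
  show ?thesis
  proof (rule Lim_transform_eventually[OF lim])
    show "\<forall>\<^sub>F n in sequentially. (c / of_nat n + 1) * (p / of_nat n + 1) / ((a / of_nat n + 1) * (b / of_nat n + 1)) =
        (c + of_nat n) * (p + of_nat n) / ((a + of_nat n) * (b + of_nat n))"
      using eventually_gt_at_top[of "0::nat"]
    proof eventually_elim
      case (elim n)
      then have n: "(of_nat n :: complex) \<noteq> 0" by simp
      have e: "\<And>z. z / of_nat n + 1 = (z + of_nat n) / (of_nat n :: complex)"
        using n by (simp add: field_simps)
      have dd: "\<And>X Y. (X / (of_nat n * of_nat n)) / (Y / (of_nat n * of_nat n)) = X / (Y::complex)"
        by (rule dd0) (use n in simp)
      show ?case unfolding e times_divide_times_eq dd by (rule refl)
    qed
  qed
qed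

lemma AA_summable_x:
  assumes "a \<notin> \<int>\<^sub>\<le>\<^sub>0" "b \<notin> \<int>\<^sub>\<le>\<^sub>0" "norm x < 1"
  shows "summable (\<lambda>n. AA c p a b n * x ^ n)"
proof -
  define r where "r = (1 + norm x) / 2"
  have r1: "r < 1" and xr: "norm x < r" using assms(3) by (auto simp: r_def)
  define \<rho> where "\<rho> n = (c + of_nat n) * (p + of_nat n) / ((a + of_nat n) * (b + of_nat n))" for n
  have "(\<lambda>n. norm (\<rho> n) * norm x) \<longlonglongrightarrow> norm (1::complex) * norm x"
    unfolding \<rho>_def by (intro tendsto_intros ratio_lim)
  then have "eventually (\<lambda>n. norm (\<rho> n) * norm x < r) sequentially"
    using xr by (intro order_tendstoD(2)) auto
  then obtain N where N: "\<And>n. n \<ge> N \<Longrightarrow> norm (\<rho> n) * norm x < r"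
    unfolding eventually_sequentially by blast
  show ?thesis
  proof (rule summable_ratio_test[OF r1])
    fix n assume "n \<ge> N"
    have "AA c p a b (Suc n) * x ^ Suc n = (\<rho> n * x) * (AA c p a b n * x ^ n)"
      unfolding AA_Suc[OF assms(1,2)] \<rho>_def[symmetric] power_Suc by (simp only: mult_ac)
    then have "norm (AA c p a b (Suc n) * x ^ Suc n) = (norm (\<rho> n) * norm x) * norm (AA c p a b n * x ^ n)"
      by (simp only: norm_mult)
    also have "\<dots> \<le> r * norm (AA c p a b n * x ^ n)"
      using N[OF \<open>n \<ge> N\<close>] by (intro mult_right_mono) auto
    finally show "norm (AA c p a b (Suc n) * x ^ Suc n) \<le> r * norm (AA c p a b n * x ^ n)" .
  qed
qed


lemma pt1:
  assumes "a \<notin> \<int>\<^sub>\<le>\<^sub>0" "b \<notin> \<int>\<^sub>\<le>\<^sub>0"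
  shows "(a-q-1)*(b-q-1)*AA c q a b (Suc n) + q*(a+b-3-2*q)*AA c (q+1) a b (Suc n)
           + q*(1+q)*AA c (q+2) a b (Suc n)
         = q*(c-q-1)*AA c (q+1) a b n + q*(1+q)*AA c (q+2) a b n"
proof -
  have h1: "q*AA c (q+1) a b m = AA c q a b m * (q + of_nat m)" for m by (rule AA_shift_p)
  have h2: "q*(1+q)*AA c (q+2) a b m = AA c q a b m * (q + of_nat m) * (q + 1 + of_nat m)" for m
  proof -
    have e: "(q+1) * AA c (q+2) a b m = AA c (q+1) a b m * (q + 1 + of_nat m)"
      using AA_shift_p[of "q+1" c a b m] by (simp add: add.assoc)
    have "q*(1+q)*AA c (q+2) a b m = q*((q+1) * AA c (q+2) a b m)"
      by (simp only: mult.assoc add.commute)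
    also have "\<dots> = (q*AA c (q+1) a b m) * (q + 1 + of_nat m)"
      by (simp only: e mult.assoc)
    also have "\<dots> = AA c q a b m * (q + of_nat m) * (q + 1 + of_nat m)"
      by (simp only: h1)
    finally show ?thesis .
  qed
  define X where "X = AA c q a b n"
  have Y: "AA c q a b (Suc n) = X * ((c + of_nat n) * (q + of_nat n) / ((a + of_nat n) * (b + of_nat n)))"
    unfolding X_def by (rule AA_Suc[OF assms])
  have nz: "a + of_nat n \<noteq> 0" "b + of_nat n \<noteq> 0" using plus_nz assms by auto
  have "(a-q-1)*(b-q-1)*AA c q a b (Suc n) + q*(a+b-3-2*q)*AA c (q+1) a b (Suc n)
           + q*(1+q)*AA c (q+2) a b (Suc n)
       = (a-q-1)*(b-q-1)*AA c q a b (Suc n) + (a+b-3-2*q)*(q*AA c (q+1) a b (Suc n))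
           + q*(1+q)*AA c (q+2) a b (Suc n)" by (simp only: mult_ac)
  also have "\<dots> = AA c q a b (Suc n) * ((a-q-1)*(b-q-1) + (a+b-3-2*q)*(q + of_nat (Suc n))
           + (q + of_nat (Suc n)) * (q + 1 + of_nat (Suc n)))"
    unfolding h1 h2 by (simp only: algebra_simps)
  also have "\<dots> = AA c q a b (Suc n) * ((a + of_nat n) * (b + of_nat n))"
    by (simp add: algebra_simps)
  also have "\<dots> = X * ((c + of_nat n) * (q + of_nat n))"
    proof -
      have D: "(a + of_nat n) * (b + of_nat n) \<noteq> 0" using nz by simp
      have cancel: "Z / DD * DD = Z" if "DD \<noteq> 0" for Z DD :: complex using that by simp
      show ?thesis unfolding Y by (simp only: mult.assoc cancel[OF D])
    qed
  also have "\<dots> = (c-q-1)*(X * (q + of_nat n)) + X * (q + of_nat n) * (q + 1 + of_nat n)"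
    by (simp add: algebra_simps)
  also have "\<dots> = q*(c-q-1)*AA c (q+1) a b n + q*(1+q)*AA c (q+2) a b n"
    unfolding h2 X_def h1[symmetric] by (simp only: mult_ac)
  finally show ?thesis .
qed

lemma pt2:
  assumes "a - 2 \<notin> \<int>\<^sub>\<le>\<^sub>0" "a - 1 \<notin> \<int>\<^sub>\<le>\<^sub>0" "a \<notin> \<int>\<^sub>\<le>\<^sub>0" "b \<notin> \<int>\<^sub>\<le>\<^sub>0"
  shows "(a-2)*(a-1)*AA c q (a-2) b (Suc n) + (a-1)*(b-a+1)*AA c q (a-1) b (Suc n)
       = (a-2)*(a-1)*AA c q (a-2) b n - (a-1)*(2*a-c-q-3)*AA c q (a-1) b n
         + (a-q-1)*(a-c-1)*AA c q a b n"
proof -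
  have h1: "(a-1)*AA c q (a-1) b m = AA c q a b m * (a - 1 + of_nat m)" for m
    using AA_shift_den[of "a-1" b c q m] assms by simp
  have h2: "(a-2)*(a-1)*AA c q (a-2) b m = AA c q a b m * (a - 1 + of_nat m) * (a - 2 + of_nat m)" for m
  proof -
    have e: "(a-2)*AA c q (a-2) b m = AA c q (a-1) b m * (a - 2 + of_nat m)"
      using AA_shift_den[of "a-2" b c q m] assms by (simp add: diff_add_eq[symmetric])
    have "(a-2)*(a-1)*AA c q (a-2) b m = (a-1)*((a-2)*AA c q (a-2) b m)"
      by (simp only: mult_ac)
    also have "\<dots> = ((a-1)*AA c q (a-1) b m) * (a - 2 + of_nat m)"
      by (simp only: e mult.assoc)
    also have "\<dots> = AA c q a b m * (a - 1 + of_nat m) * (a - 2 + of_nat m)"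
      by (simp only: h1)
    finally show ?thesis .
  qed
  define X where "X = AA c q a b n"
  have Y: "AA c q a b (Suc n) = X * ((c + of_nat n) * (q + of_nat n) / ((a + of_nat n) * (b + of_nat n)))"
    unfolding X_def by (rule AA_Suc[OF assms(3,4)])
  have nz: "a + of_nat n \<noteq> 0" "b + of_nat n \<noteq> 0" using plus_nz assms by auto
  have "(a-2)*(a-1)*AA c q (a-2) b (Suc n) + (a-1)*(b-a+1)*AA c q (a-1) b (Suc n)
      = (a-2)*(a-1)*AA c q (a-2) b (Suc n) + (b-a+1)*((a-1)*AA c q (a-1) b (Suc n))"
    by (simp only: mult_ac)
  also have "\<dots> = AA c q a b (Suc n) * ((a - 1 + of_nat (Suc n)) * (a - 2 + of_nat (Suc n))
                  + (b-a+1)*(a - 1 + of_nat (Suc n)))"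
    unfolding h1 h2 by (simp only: algebra_simps)
  also have "\<dots> = AA c q a b (Suc n) * ((a + of_nat n) * (b + of_nat n))"
    by (simp add: algebra_simps)
  also have "\<dots> = X * ((c + of_nat n) * (q + of_nat n))"
    proof -
      have D: "(a + of_nat n) * (b + of_nat n) \<noteq> 0" using nz by simp
      have cancel: "Z / DD * DD = Z" if "DD \<noteq> 0" for Z DD :: complex using that by simp
      show ?thesis unfolding Y by (simp only: mult.assoc cancel[OF D])
    qed
  also have "\<dots> = X * (a - 1 + of_nat n) * (a - 2 + of_nat n) - (2*a-c-q-3)*(X * (a - 1 + of_nat n))
         + (a-q-1)*(a-c-1)*X"
    by (simp add: algebra_simps)
  also have "\<dots> = (a-2)*(a-1)*AA c q (a-2) b n - (a-1)*(2*a-c-q-3)*AA c q (a-1) b n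
         + (a-q-1)*(a-c-1)*AA c q a b n"
    unfolding h2 X_def h1[symmetric] by (simp only: mult_ac)
  finally show ?thesis .
qed


definition SS :: "complex \<Rightarrow> complex \<Rightarrow> complex \<Rightarrow> complex \<Rightarrow> complex \<Rightarrow> nat \<Rightarrow> complex" where
  "SS c p a b x M = (\<Sum>n<M. AA c p a b n * x ^ n)"

lemma SS_0 [simp]: "SS c p a b x 0 = 0" by (simp add: SS_def)
lemma SS_Suc: "SS c p a b x (Suc M) = SS c p a b x M + AA c p a b M * x ^ M"
  by (simp add: SS_def)

lemma SS_lim: "summable (\<lambda>n. AA c p a b n * x ^ n) \<Longrightarrow> SS c p a b x \<longlonglongrightarrow> hyp3F2 1 c p a b x"
  unfolding hyp_AA SS_def[abs_def] by (rule summable_LIMSEQ)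

lemma fin1:
  assumes "a \<notin> \<int>\<^sub>\<le>\<^sub>0" "b \<notin> \<int>\<^sub>\<le>\<^sub>0"
  shows "(a-q-1)*(b-q-1)*SS c q a b x (Suc N) + q*(a+b-3-2*q)*SS c (q+1) a b x (Suc N)
           + q*(1+q)*SS c (q+2) a b x (Suc N)
         = (a-1)*(b-1) + x*(q*(c-q-1)*SS c (q+1) a b x N + q*(1+q)*SS c (q+2) a b x N)"
proof (induction N)
  case 0
  show ?case by (simp add: SS_Suc algebra_simps)
next
  case (Suc N)
  have "(a-q-1)*(b-q-1)*SS c q a b x (Suc (Suc N)) + q*(a+b-3-2*q)*SS c (q+1) a b x (Suc (Suc N))
           + q*(1+q)*SS c (q+2) a b x (Suc (Suc N))
      = ((a-q-1)*(b-q-1)*SS c q a b x (Suc N) + q*(a+b-3-2*q)*SS c (q+1) a b x (Suc N)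
           + q*(1+q)*SS c (q+2) a b x (Suc N))
        + ((a-q-1)*(b-q-1)*AA c q a b (Suc N) + q*(a+b-3-2*q)*AA c (q+1) a b (Suc N)
           + q*(1+q)*AA c (q+2) a b (Suc N)) * x ^ Suc N"
    by (simp only: SS_Suc[of _ _ _ _ _ "Suc N"]) (simp add: algebra_simps)
  also have "\<dots> = ((a-1)*(b-1) + x*(q*(c-q-1)*SS c (q+1) a b x N + q*(1+q)*SS c (q+2) a b x N))
        + (q*(c-q-1)*AA c (q+1) a b N + q*(1+q)*AA c (q+2) a b N) * x ^ Suc N"
    by (simp only: Suc.IH pt1[OF assms])
  also have "\<dots> = (a-1)*(b-1) + x*(q*(c-q-1)*SS c (q+1) a b x (Suc N) + q*(1+q)*SS c (q+2) a b x (Suc N))"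
    by (simp only: SS_Suc[of _ _ _ _ _ N]) (simp add: algebra_simps)
  finally show ?case .
qed

lemma fin2:
  assumes "a - 2 \<notin> \<int>\<^sub>\<le>\<^sub>0" "a - 1 \<notin> \<int>\<^sub>\<le>\<^sub>0" "a \<notin> \<int>\<^sub>\<le>\<^sub>0" "b \<notin> \<int>\<^sub>\<le>\<^sub>0"
  shows "(a-2)*(a-1)*SS c q (a-2) b x (Suc N) + (a-1)*(b-a+1)*SS c q (a-1) b x (Suc N)
         = (a-1)*(b-1) + x*((a-2)*(a-1)*SS c q (a-2) b x N - (a-1)*(2*a-c-q-3)*SS c q (a-1) b x N
                            + (a-q-1)*(a-c-1)*SS c q a b x N)"
proof (induction N)
  case 0
  show ?case by (simp add: SS_Suc algebra_simps)
next
  case (Suc N)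
  have "(a-2)*(a-1)*SS c q (a-2) b x (Suc (Suc N)) + (a-1)*(b-a+1)*SS c q (a-1) b x (Suc (Suc N))
      = ((a-2)*(a-1)*SS c q (a-2) b x (Suc N) + (a-1)*(b-a+1)*SS c q (a-1) b x (Suc N))
        + ((a-2)*(a-1)*AA c q (a-2) b (Suc N) + (a-1)*(b-a+1)*AA c q (a-1) b (Suc N)) * x ^ Suc N"
    by (simp only: SS_Suc[of _ _ _ _ _ "Suc N"]) (simp add: algebra_simps)
  also have "\<dots> = ((a-1)*(b-1) + x*((a-2)*(a-1)*SS c q (a-2) b x N - (a-1)*(2*a-c-q-3)*SS c q (a-1) b x N
                            + (a-q-1)*(a-c-1)*SS c q a b x N))
        + ((a-2)*(a-1)*AA c q (a-2) b N - (a-1)*(2*a-c-q-3)*AA c q (a-1) b N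
         + (a-q-1)*(a-c-1)*AA c q a b N) * x ^ Suc N"
    by (simp only: Suc.IH pt2[OF assms])
  also have "\<dots> = (a-1)*(b-1) + x*((a-2)*(a-1)*SS c q (a-2) b x (Suc N) - (a-1)*(2*a-c-q-3)*SS c q (a-1) b x (Suc N)
                            + (a-q-1)*(a-c-1)*SS c q a b x (Suc N))"
    by (simp only: SS_Suc[of _ _ _ _ _ N]) (simp add: algebra_simps)
  finally show ?case .
qed


lemma part1:
  assumes a0: "a \<notin> \<int>\<^sub>\<le>\<^sub>0" and b0: "b \<notin> \<int>\<^sub>\<le>\<^sub>0" and x: "norm x < 1"
  shows "(a - q - 1) * (b - q - 1) * hyp3F2 1 c q a b x
           + q * (a + b - 3 - 2 * q - (c - q - 1) * x) * hyp3F2 1 c (q + 1) a b x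
           + q * (1 + q) * (1 - x) * hyp3F2 1 c (q + 2) a b x
           = (a - 1) * (b - 1)"
proof -
  have L: "SS c p a b x \<longlonglongrightarrow> hyp3F2 1 c p a b x" for p
    by (rule SS_lim[OF AA_summable_x[OF a0 b0 x]])
  have L' : "(\<lambda>N. SS c p a b x (Suc N)) \<longlonglongrightarrow> hyp3F2 1 c p a b x" for p
    by (rule LIMSEQ_Suc[OF L])
  have l1: "(\<lambda>N. (a-q-1)*(b-q-1)*SS c q a b x (Suc N) + q*(a+b-3-2*q)*SS c (q+1) a b x (Suc N)
           + q*(1+q)*SS c (q+2) a b x (Suc N)) \<longlonglongrightarrow>
       (a-q-1)*(b-q-1)*hyp3F2 1 c q a b x + q*(a+b-3-2*q)*hyp3F2 1 c (q+1) a b x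
           + q*(1+q)*hyp3F2 1 c (q+2) a b x"
    by (intro tendsto_add tendsto_mult_left L')
  have l2: "(\<lambda>N. (a-1)*(b-1) + x*(q*(c-q-1)*SS c (q+1) a b x N + q*(1+q)*SS c (q+2) a b x N)) \<longlonglongrightarrow>
       (a-1)*(b-1) + x*(q*(c-q-1)*hyp3F2 1 c (q+1) a b x + q*(1+q)*hyp3F2 1 c (q+2) a b x)"
    by (intro tendsto_add tendsto_mult_left L tendsto_const)
  have eq: "(a-q-1)*(b-q-1)*hyp3F2 1 c q a b x + q*(a+b-3-2*q)*hyp3F2 1 c (q+1) a b x
           + q*(1+q)*hyp3F2 1 c (q+2) a b x
       = (a-1)*(b-1) + x*(q*(c-q-1)*hyp3F2 1 c (q+1) a b x + q*(1+q)*hyp3F2 1 c (q+2) a b x)"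
    using l1 unfolding fin1[OF a0 b0] using l2 by (rule LIMSEQ_unique)
  have "(a - q - 1) * (b - q - 1) * hyp3F2 1 c q a b x
           + q * (a + b - 3 - 2 * q - (c - q - 1) * x) * hyp3F2 1 c (q + 1) a b x
           + q * (1 + q) * (1 - x) * hyp3F2 1 c (q + 2) a b x
      = ((a-q-1)*(b-q-1)*hyp3F2 1 c q a b x + q*(a+b-3-2*q)*hyp3F2 1 c (q+1) a b x
           + q*(1+q)*hyp3F2 1 c (q+2) a b x)
        - x*(q*(c-q-1)*hyp3F2 1 c (q+1) a b x + q*(1+q)*hyp3F2 1 c (q+2) a b x)"
    by (simp add: algebra_simps)
  also have "\<dots> = (a - 1) * (b - 1)" unfolding eq by simp
  finally show ?thesis .
qed

lemma part2:
  assumes a2: "a - 2 \<notin> \<int>\<^sub>\<le>\<^sub>0" and a1: "a - 1 \<notin> \<int>\<^sub>\<le>\<^sub>0" and a0: "a \<notin> \<int>\<^sub>\<le>\<^sub>0"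
      and b0: "b \<notin> \<int>\<^sub>\<le>\<^sub>0" and x: "norm x < 1"
  shows "(a - 2) * (a - 1) * (1 - x) * hyp3F2 1 c q (a - 2) b x
           + (a - 1) * ((2 * a - c - q - 3) * x - a + b + 1) * hyp3F2 1 c q (a - 1) b x
           - (a - q - 1) * (a - c - 1) * x * hyp3F2 1 c q a b x
           = (a - 1) * (b - 1)"
proof -
  have L: "SS c q d b x \<longlonglongrightarrow> hyp3F2 1 c q d b x" if "d \<notin> \<int>\<^sub>\<le>\<^sub>0" for d
    by (rule SS_lim[OF AA_summable_x[OF that b0 x]])
  have L' : "(\<lambda>N. SS c q d b x (Suc N)) \<longlonglongrightarrow> hyp3F2 1 c q d b x" if "d \<notin> \<int>\<^sub>\<le>\<^sub>0" for d
    by (rule LIMSEQ_Suc[OF L[OF that]])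
  have l1: "(\<lambda>N. (a-2)*(a-1)*SS c q (a-2) b x (Suc N) + (a-1)*(b-a+1)*SS c q (a-1) b x (Suc N)) \<longlonglongrightarrow>
       (a-2)*(a-1)*hyp3F2 1 c q (a-2) b x + (a-1)*(b-a+1)*hyp3F2 1 c q (a-1) b x"
    by (intro tendsto_add tendsto_mult_left L' a1 a2)
  have l2: "(\<lambda>N. (a-1)*(b-1) + x*((a-2)*(a-1)*SS c q (a-2) b x N - (a-1)*(2*a-c-q-3)*SS c q (a-1) b x N
                            + (a-q-1)*(a-c-1)*SS c q a b x N)) \<longlonglongrightarrow>
       (a-1)*(b-1) + x*((a-2)*(a-1)*hyp3F2 1 c q (a-2) b x - (a-1)*(2*a-c-q-3)*hyp3F2 1 c q (a-1) b x
                            + (a-q-1)*(a-c-1)*hyp3F2 1 c q a b x)"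
    by (intro tendsto_add tendsto_diff tendsto_mult_left L a0 a1 a2 tendsto_const)
  have eq: "(a-2)*(a-1)*hyp3F2 1 c q (a-2) b x + (a-1)*(b-a+1)*hyp3F2 1 c q (a-1) b x
     = (a-1)*(b-1) + x*((a-2)*(a-1)*hyp3F2 1 c q (a-2) b x - (a-1)*(2*a-c-q-3)*hyp3F2 1 c q (a-1) b x
                            + (a-q-1)*(a-c-1)*hyp3F2 1 c q a b x)"
    using l1 unfolding fin2[OF a2 a1 a0 b0] using l2 by (rule LIMSEQ_unique)
  have "(a - 2) * (a - 1) * (1 - x) * hyp3F2 1 c q (a - 2) b x
           + (a - 1) * ((2 * a - c - q - 3) * x - a + b + 1) * hyp3F2 1 c q (a - 1) b x
           - (a - q - 1) * (a - c - 1) * x * hyp3F2 1 c q a b x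
      = ((a-2)*(a-1)*hyp3F2 1 c q (a-2) b x + (a-1)*(b-a+1)*hyp3F2 1 c q (a-1) b x)
        - x*((a-2)*(a-1)*hyp3F2 1 c q (a-2) b x - (a-1)*(2*a-c-q-3)*hyp3F2 1 c q (a-1) b x
                            + (a-q-1)*(a-c-1)*hyp3F2 1 c q a b x)"
    by (simp add: algebra_simps)
  also have "\<dots> = (a - 1) * (b - 1)" unfolding eq by simp
  finally show ?thesis .
qed

lemma part3:
  assumes a0: "a \<notin> \<int>\<^sub>\<le>\<^sub>0" and b0: "b \<notin> \<int>\<^sub>\<le>\<^sub>0" and h: "Re (a + b) > Re (c + q + 2)"
  shows "(a - q - 1) * (b - q - 1) * hyp3F2 1 c q a b 1
           + q * (a + b - c - 2 - q) * hyp3F2 1 c (q + 1) a b 1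
           = (a - 1) * (b - 1)"
proof -
  have sm: "summable (\<lambda>n. AA c p a b n * 1 ^ n)" if "Re (c + p - a - b) < -1" for p
    using AA_summable[OF a0 b0 that] by simp
  have L0: "(\<lambda>N. SS c q a b 1 (Suc N)) \<longlonglongrightarrow> hyp3F2 1 c q a b 1"
    by (rule LIMSEQ_Suc[OF SS_lim[OF sm]]) (use h in simp)
  have L1': "(\<lambda>N. SS c (q+1) a b 1 (Suc N)) \<longlonglongrightarrow> hyp3F2 1 c (q+1) a b 1"
    by (rule LIMSEQ_Suc[OF SS_lim[OF sm]]) (use h in simp)
  have L1: "SS c (q+1) a b 1 \<longlonglongrightarrow> hyp3F2 1 c (q+1) a b 1"
    by (rule SS_lim[OF sm]) (use h in simp)
  have Z: "AA c (q+2) a b \<longlonglongrightarrow> 0"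
    by (rule AA_tendsto0[OF a0 b0]) (use h in simp)
  have l: "(\<lambda>N. (a-q-1)*(b-q-1)*SS c q a b 1 (Suc N) + q*(a+b-3-2*q)*SS c (q+1) a b 1 (Suc N)
              - q*(c-q-1)*SS c (q+1) a b 1 N + q*(1+q)*AA c (q+2) a b N) \<longlonglongrightarrow>
        (a-q-1)*(b-q-1)*hyp3F2 1 c q a b 1 + q*(a+b-3-2*q)*hyp3F2 1 c (q+1) a b 1
              - q*(c-q-1)*hyp3F2 1 c (q+1) a b 1 + q*(1+q)*0"
    by (intro tendsto_add tendsto_diff tendsto_mult_left L0 L1' L1 Z)
  have e: "(a-q-1)*(b-q-1)*SS c q a b 1 (Suc N) + q*(a+b-3-2*q)*SS c (q+1) a b 1 (Suc N)
              - q*(c-q-1)*SS c (q+1) a b 1 N + q*(1+q)*AA c (q+2) a b N = (a-1)*(b-1)" for N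
  proof -
    have f: "(a-q-1)*(b-q-1)*SS c q a b 1 (Suc N) + q*(a+b-3-2*q)*SS c (q+1) a b 1 (Suc N)
           + q*(1+q)*SS c (q+2) a b 1 (Suc N)
         = (a-1)*(b-1) + 1*(q*(c-q-1)*SS c (q+1) a b 1 N + q*(1+q)*SS c (q+2) a b 1 N)"
      by (rule fin1[OF a0 b0])
    have e2: "SS c (q+2) a b 1 (Suc N) = SS c (q+2) a b 1 N + AA c (q+2) a b N"
      by (simp add: SS_Suc)
    have "(a-q-1)*(b-q-1)*SS c q a b 1 (Suc N) + q*(a+b-3-2*q)*SS c (q+1) a b 1 (Suc N)
              - q*(c-q-1)*SS c (q+1) a b 1 N + q*(1+q)*AA c (q+2) a b N
        = ((a-q-1)*(b-q-1)*SS c q a b 1 (Suc N) + q*(a+b-3-2*q)*SS c (q+1) a b 1 (Suc N)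
           + q*(1+q)*SS c (q+2) a b 1 (Suc N)) - 1*(q*(c-q-1)*SS c (q+1) a b 1 N + q*(1+q)*SS c (q+2) a b 1 N)"
      unfolding e2 by (simp add: algebra_simps)
    also have "\<dots> = (a-1)*(b-1)" unfolding f by simp
    finally show ?thesis .
  qed
  have "(a-q-1)*(b-q-1)*hyp3F2 1 c q a b 1 + q*(a+b-3-2*q)*hyp3F2 1 c (q+1) a b 1
              - q*(c-q-1)*hyp3F2 1 c (q+1) a b 1 + q*(1+q)*0 = (a-1)*(b-1)"
    using l unfolding e by (rule LIMSEQ_unique[OF _ tendsto_const])
  then show ?thesis by (simp add: algebra_simps)
qed

lemma part4:
  assumes a2: "a - 2 \<notin> \<int>\<^sub>\<le>\<^sub>0" and a1: "a - 1 \<notin> \<int>\<^sub>\<le>\<^sub>0" and a0: "a \<notin> \<int>\<^sub>\<le>\<^sub>0"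
      and b0: "b \<notin> \<int>\<^sub>\<le>\<^sub>0" and h: "Re (a + b) > Re (c + q + 2)"
  shows "(a - 1) * (a + b - c - q - 2) * hyp3F2 1 c q (a - 1) b 1
           - (a - q - 1) * (a - c - 1) * hyp3F2 1 c q a b 1
           = (a - 1) * (b - 1)"
proof -
  have sm: "summable (\<lambda>n. AA c q d b n * 1 ^ n)" if "d \<notin> \<int>\<^sub>\<le>\<^sub>0" "Re (c + q - d - b) < -1" for d
    using AA_summable[OF that(1) b0 that(2)] by simp
  have LC': "(\<lambda>N. SS c q (a-1) b 1 (Suc N)) \<longlonglongrightarrow> hyp3F2 1 c q (a-1) b 1"
    by (rule LIMSEQ_Suc[OF SS_lim[OF sm[OF a1]]]) (use h in simp)
  have LC: "SS c q (a-1) b 1 \<longlonglongrightarrow> hyp3F2 1 c q (a-1) b 1"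
    by (rule SS_lim[OF sm[OF a1]]) (use h in simp)
  have LD: "SS c q a b 1 \<longlonglongrightarrow> hyp3F2 1 c q a b 1"
    by (rule SS_lim[OF sm[OF a0]]) (use h in simp)
  have Z: "AA c q (a-2) b \<longlonglongrightarrow> 0"
    by (rule AA_tendsto0[OF a2 b0]) (use h in simp)
  have l: "(\<lambda>N. (a-2)*(a-1)*AA c q (a-2) b N + (a-1)*(b-a+1)*SS c q (a-1) b 1 (Suc N)
              + (a-1)*(2*a-c-q-3)*SS c q (a-1) b 1 N - (a-q-1)*(a-c-1)*SS c q a b 1 N) \<longlonglongrightarrow>
        (a-2)*(a-1)*0 + (a-1)*(b-a+1)*hyp3F2 1 c q (a-1) b 1
              + (a-1)*(2*a-c-q-3)*hyp3F2 1 c q (a-1) b 1 - (a-q-1)*(a-c-1)*hyp3F2 1 c q a b 1"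
    by (intro tendsto_add tendsto_diff tendsto_mult_left LC' LC LD Z)
  have e: "(a-2)*(a-1)*AA c q (a-2) b N + (a-1)*(b-a+1)*SS c q (a-1) b 1 (Suc N)
              + (a-1)*(2*a-c-q-3)*SS c q (a-1) b 1 N - (a-q-1)*(a-c-1)*SS c q a b 1 N = (a-1)*(b-1)" for N
  proof -
    have f: "(a-2)*(a-1)*SS c q (a-2) b 1 (Suc N) + (a-1)*(b-a+1)*SS c q (a-1) b 1 (Suc N)
         = (a-1)*(b-1) + 1*((a-2)*(a-1)*SS c q (a-2) b 1 N - (a-1)*(2*a-c-q-3)*SS c q (a-1) b 1 N
                            + (a-q-1)*(a-c-1)*SS c q a b 1 N)"
      by (rule fin2[OF a2 a1 a0 b0])
    have e2: "SS c q (a-2) b 1 (Suc N) = SS c q (a-2) b 1 N + AA c q (a-2) b N"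
      by (simp add: SS_Suc)
    have "(a-2)*(a-1)*AA c q (a-2) b N + (a-1)*(b-a+1)*SS c q (a-1) b 1 (Suc N)
              + (a-1)*(2*a-c-q-3)*SS c q (a-1) b 1 N - (a-q-1)*(a-c-1)*SS c q a b 1 N
        = ((a-2)*(a-1)*SS c q (a-2) b 1 (Suc N) + (a-1)*(b-a+1)*SS c q (a-1) b 1 (Suc N))
          - 1*((a-2)*(a-1)*SS c q (a-2) b 1 N - (a-1)*(2*a-c-q-3)*SS c q (a-1) b 1 N
                            + (a-q-1)*(a-c-1)*SS c q a b 1 N)"
      unfolding e2 by (simp add: algebra_simps)
    also have "\<dots> = (a-1)*(b-1)" unfolding f by simp
    finally show ?thesis .
  qed
  have "(a-2)*(a-1)*0 + (a-1)*(b-a+1)*hyp3F2 1 c q (a-1) b 1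
              + (a-1)*(2*a-c-q-3)*hyp3F2 1 c q (a-1) b 1 - (a-q-1)*(a-c-1)*hyp3F2 1 c q a b 1 = (a-1)*(b-1)"
    using l unfolding e by (rule LIMSEQ_unique[OF _ tendsto_const])
  then show ?thesis by (simp add: algebra_simps)
qed


theorem lemma7p2:
  fixes a b c q x :: complex
  assumes a2: "a - 2 \<notin> \<int>\<^sub>\<le>\<^sub>0" and a1: "a - 1 \<notin> \<int>\<^sub>\<le>\<^sub>0" and a0: "a \<notin> \<int>\<^sub>\<le>\<^sub>0"
      and b0: "b \<notin> \<int>\<^sub>\<le>\<^sub>0"
  shows "(norm x < 1 \<longrightarrow>
           (a - q - 1) * (b - q - 1) * hyp3F2 1 c q a b x
           + q * (a + b - 3 - 2 * q - (c - q - 1) * x) * hyp3F2 1 c (q + 1) a b x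
           + q * (1 + q) * (1 - x) * hyp3F2 1 c (q + 2) a b x
           = (a - 1) * (b - 1)) \<and>
        (norm x < 1 \<longrightarrow>
           (a - 2) * (a - 1) * (1 - x) * hyp3F2 1 c q (a - 2) b x
           + (a - 1) * ((2 * a - c - q - 3) * x - a + b + 1) * hyp3F2 1 c q (a - 1) b x
           - (a - q - 1) * (a - c - 1) * x * hyp3F2 1 c q a b x
           = (a - 1) * (b - 1)) \<and>
        (a \<in> \<real> \<and> b \<in> \<real> \<and> c \<in> \<real> \<and> q \<in> \<real> \<and> Re (a + b) > Re (c + q + 2) \<longrightarrow>
           (a - q - 1) * (b - q - 1) * hyp3F2 1 c q a b 1
           + q * (a + b - c - 2 - q) * hyp3F2 1 c (q + 1) a b 1
           = (a - 1) * (b - 1)) \<and>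
        (a \<in> \<real> \<and> b \<in> \<real> \<and> c \<in> \<real> \<and> q \<in> \<real> \<and> Re (a + b) > Re (c + q + 2) \<longrightarrow>
           (a - 1) * (a + b - c - q - 2) * hyp3F2 1 c q (a - 1) b 1
           - (a - q - 1) * (a - c - 1) * hyp3F2 1 c q a b 1
           = (a - 1) * (b - 1))"
    using part1[OF a0 b0, of x q c] part2[OF a2 a1 a0 b0, of x c q] part3[OF a0 b0, of c q]
    part4[OF a2 a1 a0 b0, of c q] by blast

end
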